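(* Let $\mathbb{H}\in\{\mathbb{R},\mathbb{C}\}$, let $A\in\mathbb{H}^{M\times N}$ be a deterministic matrix whose $m$th row is $a_m^H$, let $x\in\mathbb{H}^N$, $e^z\in\mathbb{H}^M$, $e^y\in\mathbb{R}^M$ be random vectors, let $f:\mathbb{H}\to\mathbb{R}$ be a measurable function, and let $y=f(Ax+e^z)+e^y\in\mathbb{R}^M$, with $f$ applied entrywise. Let $\mathcal{T}:\mathbb{R}\to\mathbb{R}$ be a measurable preprocessing function, applied entrywise to vectors, and assume $\mathbb{E}[\mathcal{T}(y_m)^2]<\infty$ for all $m$ and $\mathbb{E}[\|x\|_2^4]<\infty$. Define $\overline{\mathcal{T}}(y)=\mathbb{E}[\mathcal{T}(y)]\in\mathbb{R}^M$, $K_x=\mathbb{E}[xx^H]$, $$T=\mathbb{E}\big[(\mathcal{T}(y)-\overline{\mathcal{T}}(y))(\mathcal{T}(y)-\overline{\mathcal{T}}(y))^T\big]\in\mathbb{R}^{M\times M},$$ and assume $T$ is full rank. Let $t\in\mathbb{R}^M$ be the (random) vector satisfying $Tt=\mathcal{T}(y)-\overline{\mathcal{T}}(y)$, and for $m=1,\dots,M$ let $$V_m=\mathbb{E}\big[(\mathcal{T}(y_m)-\overline{\mathcal{T}}(y_m))(xx^H-K_x)\big]\in\mathbb{H}^{N\times N}.$$ Consider the problem $$\underset{\widetilde W_m\in\mathbb{H}^{N\times N},\ m=0,\dots,M}{\mathrm{minimize}}\ \mathbb{E}\Big[\Big\|\widetilde W_0+\sum_{m=1}^M\mathcal{T}(y_m)\widetilde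 W_m-xx^H\Big\|_F^2\Big].$$ Then the matrix $D_y=\widetilde W_0+\sum_{m=1}^M\mathcal{T}(y_m)\widetilde W_m$ produced by a minimizer of this problem (i.e., the affine-in-$\mathcal{T}(y)$ matrix minimizing the spectral MSE $\mathbb{E}[\|D_y-xx^H\|_F^2]$) is $$D_y=K_x+\sum_{m=1}^M t_mV_m.$$
   Context: Expectations are taken jointly over the random quantities $x$, $e^z$, $e^y$ ($A$ is deterministic). For $\mathbb{H}=\mathbb{R}$, the superscript $H$ denotes transpose. $\|\cdot\|_F$ is the Frobenius norm. The matrix $D_y$ is called the linear spectral estimator (LSPE) matrix, and the linear spectral estimate of $x$ is a (scaled) leading eigenvector of $D_y$, i.e., a minimizer of $\|D_y-\tilde x\tilde x^H\|_F$ over $\tilde x\in\mathbb{H}^N$. *)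

theory Defs
  imports "HOL-Probability.Probability"
begin

text \<open>We capture "H in {R, C}" by a type class:
  a complete real normed field (hence R or C up to isomorphism, by Gelfand--Mazur/Ostrowski)
  equipped with its conjugation, characterised by x * conj x = |x|^2.
  Both real (conjugation = identity) and complex (conjugation = cnj) are instances.\<close>

class hscalar = real_normed_field + euclidean_space +
  fixes hcnj :: "'a \<Rightarrow> 'a"
  assumes hcnj_add: "hcnj ((x::'a) + y) = hcnj x + hcnj y"
    and hcnj_mult: "hcnj (x * y) = hcnj x * hcnj y"
    and hcnj_hcnj: "hcnj (hcnj x) = x"
    and mult_hcnj: "x * hcnj x = (norm x)\<^sup>2 *\<^sub>R 1"

instantiation real :: hscalar
begin
definition hcnj_real :: "real \<Rightarrow> real" where "hcnj_real x = x"
instance proof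
  fix x y :: real
  show "hcnj (x + y) = hcnj x + hcnj y" "hcnj (x * y) = hcnj x * hcnj y" "hcnj (hcnj x) = x"
    by (simp_all add: hcnj_real_def)
  show "x * hcnj x = (norm x)\<^sup>2 *\<^sub>R 1"
    by (simp add: hcnj_real_def power2_eq_square)
qed
end

instantiation complex :: hscalar
begin
definition hcnj_complex :: "complex \<Rightarrow> complex" where "hcnj_complex = cnj"
instance proof
  fix x y :: complex
  show "hcnj (x + y) = hcnj x + hcnj y" "hcnj (x * y) = hcnj x * hcnj y" "hcnj (hcnj x) = x"
    by (simp_all add: hcnj_complex_def)
  show "x * hcnj x = (norm x)\<^sup>2 *\<^sub>R 1"
    unfolding hcnj_complex_def scaleR_conv_of_real mult_1_right
    by (rule complex_norm_square[symmetric])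
qed
end

definition outer_H :: "'a::hscalar ^'n \<Rightarrow> 'a ^'n ^'n" where
  "outer_H v = (\<chi> i j. v $ i * hcnj (v $ j))"

definition frob_norm :: "'a::real_normed_vector ^'n ^'m \<Rightarrow> real" where
  "frob_norm A = sqrt (\<Sum>i\<in>UNIV. \<Sum>j\<in>UNIV. (norm (A $ i $ j))\<^sup>2)"

end

theory Submission
  imports Defs
begin

lemma frob_norm_eq: "frob_norm A = norm A"
  unfolding frob_norm_def norm_vec_def L2_set_def
  by (simp add: sum_nonneg)

lemma hcnj_zero: "hcnj (0::'a::hscalar) = 0"
  using hcnj_add[of "0::'a" 0] by simp

lemma hcnj_formula: "hcnj (a::'a::hscalar) = (norm a)\<^sup>2 *\<^sub>R inverse a"
proof (cases "a = 0")
  case True then show ?thesis by (simp add: hcnj_zero)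
next
  case False
  have "hcnj a = inverse a * (a * hcnj a)" using False by (simp add: field_simps)
  also have "\<dots> = (norm a)\<^sup>2 *\<^sub>R inverse a" by (simp add: mult_hcnj)
  finally show ?thesis .
qed

lemma norm_hcnj: "norm (hcnj (a::'a::hscalar)) = norm a"
  by (cases "a = 0") (simp_all add: hcnj_formula norm_inverse power2_eq_square hcnj_zero)

lemma hcnj_scaleR: "hcnj (r *\<^sub>R (a::'a::hscalar)) = r *\<^sub>R hcnj a"
proof -
  have "hcnj (r *\<^sub>R a) = hcnj (of_real r * a)" by (simp add: scaleR_conv_of_real)
  also have "\<dots> = hcnj (of_real r) * hcnj a" by (rule hcnj_mult)
  also have "hcnj (of_real r :: 'a) = of_real r"
    by (cases "r = 0") (simp_all add: hcnj_formula scaleR_conv_of_real power2_eq_square field_simps)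
  finally show ?thesis by (simp add: scaleR_conv_of_real)
qed

lemma hcnj_linear: "linear (hcnj :: 'a::hscalar \<Rightarrow> 'a)"
  by (rule linearI) (simp_all add: hcnj_add hcnj_scaleR)

lemma hcnj_cont: "continuous_on S (hcnj :: 'a::hscalar \<Rightarrow> 'a)"
  using hcnj_linear linear_conv_bounded_linear linear_continuous_on by blast

lemma outer_H_cont: "continuous_on UNIV (outer_H :: 'a::hscalar^'n \<Rightarrow> _)"
  unfolding outer_H_def
  by (intro continuous_on_vec_lambda continuous_on_mult continuous_on_component continuous_on_id
        continuous_on_compose2[OF hcnj_cont]) auto

lemma norm_outer_H: "norm (outer_H (v::'a::hscalar^'n)) = (norm v)\<^sup>2"
proof -
  have "(norm (outer_H v))\<^sup>2 = (\<Sum>i\<in>UNIV. \<Sum>j\<in>UNIV. (norm (v$i))\<^sup>2 * (norm (v$j))\<^sup>2)"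
    unfolding frob_norm_eq[symmetric] frob_norm_def outer_H_def
    by (simp add: sum_nonneg norm_mult norm_hcnj power_mult_distrib)
  also have "\<dots> = ((norm v)\<^sup>2)\<^sup>2"
    unfolding norm_vec_def L2_set_def
    by (simp add: sum_nonneg power2_eq_square sum_product)
  finally have h: "(norm (outer_H v))\<^sup>2 = ((norm v)\<^sup>2)\<^sup>2" .
  show ?thesis by (metis h norm_ge_zero zero_le_power2 power2_eq_iff_nonneg)
qed

lemma sq_sum_bound: "(a + b)\<^sup>2 \<le> 2 * a\<^sup>2 + 2 * (b::real)\<^sup>2"
proof -
  have "0 \<le> (a - b)\<^sup>2" by simp
  thus ?thesis by (simp add: power2_eq_square algebra_simps)
qed

lemma prod_bound: "0 \<le> a \<Longrightarrow> 0 \<le> b \<Longrightarrow> a * b \<le> a\<^sup>2 + (b::real)\<^sup>2"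
proof -
  assume "0 \<le> a" "0 \<le> b"
  hence "0 \<le> a * b" by simp
  have "0 \<le> (a - b)\<^sup>2" by simp
  thus ?thesis using \<open>0 \<le> a * b\<close> by (simp add: power2_eq_square algebra_simps)
qed

lemma lin_bound: "0 \<le> x \<Longrightarrow> x \<le> 1 + (x::real)\<^sup>2"
proof -
  assume "0 \<le> x"
  have "0 \<le> (x - 1)\<^sup>2" by simp
  thus ?thesis using \<open>0 \<le> x\<close> by (simp add: power2_eq_square algebra_simps)
qed

definition sqi :: "'a measure \<Rightarrow> ('a \<Rightarrow> 'b::euclidean_space) \<Rightarrow> bool" where
  "sqi M F \<longleftrightarrow> F \<in> borel_measurable M \<and> integrable M (\<lambda>w. (norm (F w))\<^sup>2)"

lemma (in prob_space) sqi_const: "sqi M (\<lambda>_. c)"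
  unfolding sqi_def by simp

lemma sqi_add:
  assumes "sqi M F" "sqi M G" shows "sqi M (\<lambda>w. F w + G w)"
proof -
  have m: "F \<in> borel_measurable M" "G \<in> borel_measurable M"
    and i: "integrable M (\<lambda>w. (norm (F w))\<^sup>2)" "integrable M (\<lambda>w. (norm (G w))\<^sup>2)"
    using assms unfolding sqi_def by auto
  have "integrable M (\<lambda>w. 2 * (norm (F w))\<^sup>2 + 2 * (norm (G w))\<^sup>2)" using i by auto
  moreover have "(\<lambda>w. (norm (F w + G w))\<^sup>2) \<in> borel_measurable M" using m by measurable
  moreover have "AE w in M. norm ((norm (F w + G w))\<^sup>2) \<le> norm (2 * (norm (F w))\<^sup>2 + 2 * (norm (G w))\<^sup>2)"
  proof (intro AE_I2)
    fix w
    have "norm (F w + G w) \<le> norm (F w) + norm (G w)" by (rule norm_triangle_ineq)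
    hence "(norm (F w + G w))\<^sup>2 \<le> (norm (F w) + norm (G w))\<^sup>2" by (simp add: power_mono)
    also have "\<dots> \<le> 2 * (norm (F w))\<^sup>2 + 2 * (norm (G w))\<^sup>2"
      by (rule sq_sum_bound)
    finally show "norm ((norm (F w + G w))\<^sup>2) \<le> norm (2 * (norm (F w))\<^sup>2 + 2 * (norm (G w))\<^sup>2)" by simp
  qed
  ultimately have "integrable M (\<lambda>w. (norm (F w + G w))\<^sup>2)" by (rule Bochner_Integration.integrable_bound)
  then show ?thesis using m unfolding sqi_def by (auto intro: borel_measurable_add)
qed

lemma sqi_uminus: "sqi M F \<Longrightarrow> sqi M (\<lambda>w. - F w)"
  unfolding sqi_def by auto

lemma sqi_diff: "sqi M F \<Longrightarrow> sqi M G \<Longrightarrow> sqi M (\<lambda>w. F w - G w)"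
  using sqi_add[of M F "\<lambda>w. - G w"] sqi_uminus[of M G] by simp

lemma (in prob_space) sqi_sum:
  assumes "finite I" "\<And>i. i \<in> I \<Longrightarrow> sqi M (F i)"
  shows "sqi M (\<lambda>w. \<Sum>i\<in>I. F i w)"
  using assms
proof (induction I rule: finite_induct)
  case empty then show ?case using sqi_const[of 0] by simp
next
  case (insert i I) then show ?case using sqi_add[of M "F i" "\<lambda>w. \<Sum>i\<in>I. F i w"] by simp
qed

lemma sqi_scaleR:
  fixes f :: "'a \<Rightarrow> real"
  assumes "f \<in> borel_measurable M" "integrable M (\<lambda>w. (f w)\<^sup>2)"
  shows "sqi M (\<lambda>w. f w *\<^sub>R c)"
  using assms unfolding sqi_def by (simp add: power_mult_distrib)

lemma sqi_real: "sqi M (f :: 'a \<Rightarrow> real) \<longleftrightarrow> f \<in> borel_measurable M \<and> integrable M (\<lambda>w. (f w)\<^sup>2)"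
  unfolding sqi_def by simp

lemma (in prob_space) sqi_integrable:
  assumes "sqi M F" shows "integrable M F"
proof -
  have m: "F \<in> borel_measurable M" and i: "integrable M (\<lambda>w. (norm (F w))\<^sup>2)"
    using assms unfolding sqi_def by auto
  have "integrable M (\<lambda>w. 1 + (norm (F w))\<^sup>2)" using i by auto
  moreover note m
  moreover have "AE w in M. norm (F w) \<le> norm (1 + (norm (F w))\<^sup>2)"
    by (intro AE_I2) (simp add: lin_bound)
  ultimately show ?thesis by (rule Bochner_Integration.integrable_bound)
qed

lemma sqi_inner:
  assumes "sqi M F" "sqi M G" shows "integrable M (\<lambda>w. F w \<bullet> G w)"
proof -
  have m: "F \<in> borel_measurable M" "G \<in> borel_measurable M"
    and i: "integrable M (\<lambda>w. (norm (F w))\<^sup>2)" "integrable M (\<lambda>w. (norm (G w))\<^sup>2)"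
    using assms unfolding sqi_def by auto
  have "integrable M (\<lambda>w. (norm (F w))\<^sup>2 + (norm (G w))\<^sup>2)" using i by auto
  moreover have "(\<lambda>w. F w \<bullet> G w) \<in> borel_measurable M" using m by measurable
  moreover have "AE w in M. norm (F w \<bullet> G w) \<le> norm ((norm (F w))\<^sup>2 + (norm (G w))\<^sup>2)"
  proof (intro AE_I2)
    fix w
    have "\<bar>F w \<bullet> G w\<bar> \<le> norm (F w) * norm (G w)" by (rule Cauchy_Schwarz_ineq2)
    also have "\<dots> \<le> (norm (F w))\<^sup>2 + (norm (G w))\<^sup>2"
      by (rule prod_bound) simp_all
    finally show "norm (F w \<bullet> G w) \<le> norm ((norm (F w))\<^sup>2 + (norm (G w))\<^sup>2)" by simp
  qed
  ultimately show ?thesis by (rule Bochner_Integration.integrable_bound)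
qed

lemma sqi_scaleR_int:
  fixes f :: "'a \<Rightarrow> real"
  assumes "sqi M f" "sqi M F" shows "integrable M (\<lambda>w. f w *\<^sub>R F w)"
proof -
  have m: "f \<in> borel_measurable M" "F \<in> borel_measurable M"
    and i: "integrable M (\<lambda>w. (norm (f w))\<^sup>2)" "integrable M (\<lambda>w. (norm (F w))\<^sup>2)"
    using assms unfolding sqi_def by auto
  have "integrable M (\<lambda>w. (norm (f w))\<^sup>2 + (norm (F w))\<^sup>2)" using i by auto
  moreover have "(\<lambda>w. f w *\<^sub>R F w) \<in> borel_measurable M" using m by measurable
  moreover have "AE w in M. norm (f w *\<^sub>R F w) \<le> norm ((norm (f w))\<^sup>2 + (norm (F w))\<^sup>2)"
  proof (intro AE_I2)
    fix w
    have "norm (f w *\<^sub>R F w) = norm (f w) * norm (F w)" by simp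
    also have "\<dots> \<le> (norm (f w))\<^sup>2 + (norm (F w))\<^sup>2"
      by (rule prod_bound) simp_all
    finally show "norm (f w *\<^sub>R F w) \<le> norm ((norm (f w))\<^sup>2 + (norm (F w))\<^sup>2)" by simp
  qed
  ultimately show ?thesis by (rule Bochner_Integration.integrable_bound)
qed

lemma sqi_expand:
  assumes "sqi M G" "sqi M B"
  shows "(\<integral>w. (norm (G w + e *\<^sub>R B w))\<^sup>2 \<partial>M) =
     (\<integral>w. (norm (G w))\<^sup>2 \<partial>M) + 2 * e * (\<integral>w. G w \<bullet> B w \<partial>M) + e\<^sup>2 * (\<integral>w. (norm (B w))\<^sup>2 \<partial>M)"
proof -
  have i: "integrable M (\<lambda>w. (norm (G w))\<^sup>2)" "integrable M (\<lambda>w. (norm (B w))\<^sup>2)"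
    "integrable M (\<lambda>w. G w \<bullet> B w)"
    using assms sqi_inner[OF assms] unfolding sqi_def by auto
  have "\<And>w. (norm (G w + e *\<^sub>R B w))\<^sup>2 = (norm (G w))\<^sup>2 + 2 * e * (G w \<bullet> B w) + e\<^sup>2 * (norm (B w))\<^sup>2"
    by (simp only: power2_norm_eq_inner) (simp add: inner_add_left inner_add_right inner_commute power2_eq_square algebra_simps)
  then have "(\<integral>w. (norm (G w + e *\<^sub>R B w))\<^sup>2 \<partial>M) =
      (\<integral>w. (norm (G w))\<^sup>2 + 2 * e * (G w \<bullet> B w) + e\<^sup>2 * (norm (B w))\<^sup>2 \<partial>M)" by simp
  also have "\<dots> = (\<integral>w. (norm (G w))\<^sup>2 + 2 * e * (G w \<bullet> B w) \<partial>M) + (\<integral>w. e\<^sup>2 * (norm (B w))\<^sup>2 \<partial>M)"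
    by (rule Bochner_Integration.integral_add) (use i in auto)
  also have "(\<integral>w. (norm (G w))\<^sup>2 + 2 * e * (G w \<bullet> B w) \<partial>M) = (\<integral>w. (norm (G w))\<^sup>2 \<partial>M) + (\<integral>w. 2 * e * (G w \<bullet> B w) \<partial>M)"
    by (rule Bochner_Integration.integral_add) (use i in auto)
  finally show ?thesis by simp
qed

lemma quad_zero:
  fixes a b :: real
  assumes "\<And>e. J \<le> J + 2 * e * a + e\<^sup>2 * b" "b \<ge> 0"
  shows "a = 0"
proof (rule ccontr)
  assume "a \<noteq> 0"
  define t where "t = 1 / (b + 1)"
  have t: "0 < t" "t * b < 2" using assms(2) unfolding t_def by (auto simp: field_simps)
  have "0 \<le> 2 * (- t * a) * a + (- t * a)\<^sup>2 * b" using assms(1)[of "- t * a"] by simp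
  also have "\<dots> = (t * a\<^sup>2) * (t * b - 2)" by (simp add: power2_eq_square algebra_simps)
  also have "\<dots> < 0" using \<open>a \<noteq> 0\<close> t
    by (intro mult_pos_neg) auto
  finally show False by simp
qed

lemma mat_as_sum: "(\<chi> i j. (g i j :: real)) = (\<Sum>i\<in>UNIV. \<Sum>j\<in>UNIV. g i j *\<^sub>R axis i (axis j 1))"
proof -
  have "(\<Sum>i\<in>UNIV. \<Sum>j\<in>UNIV. g i j *\<^sub>R axis i (axis j 1)) $ a $ c = g a c" for a c
  proof -
    have ax: "axis i (axis j (1::real)) $ a $ c = (if i = a \<and> j = c then 1 else 0)" for i j
      by (auto simp: axis_def)
    have in1: "(\<Sum>j\<in>UNIV. g i j * (if i = a \<and> j = c then 1 else 0)) = (if i = a then g i c else 0)" for i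
    proof (cases "i = a")
      case True
      have "(\<Sum>j\<in>UNIV. g a j * (if j = c then 1 else 0)) = (\<Sum>j\<in>UNIV. if j = c then g a j else 0)"
        by (rule sum.cong) auto
      then show ?thesis using True by simp
    qed simp
    have "(\<Sum>i\<in>UNIV. \<Sum>j\<in>UNIV. g i j *\<^sub>R axis i (axis j 1)) $ a $ c
        = (\<Sum>i\<in>UNIV. \<Sum>j\<in>UNIV. g i j * (if i = a \<and> j = c then 1 else 0))"
      by (simp add: ax)
    also have "\<dots> = g a c" by (simp add: in1)
    finally show ?thesis .
  qed
  then show ?thesis by (simp add: vec_eq_iff)
qed

lemma meas_nth: "g \<in> borel_measurable M \<Longrightarrow> (\<lambda>w. g w $ i) \<in> borel_measurable M"
  by (rule measurable_compose[OF _ borel_measurable_continuous_onI[OF continuous_on_component[OF continuous_on_id]]])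

lemma meas_mv: "g \<in> borel_measurable M \<Longrightarrow> (\<lambda>w. (A::'a::{euclidean_space,real_algebra_1}^'n^'m) *v g w) \<in> borel_measurable M"
  by (rule measurable_compose[OF _ borel_measurable_continuous_onI[OF linear_continuous_on[OF matrix_vector_mul_bounded_linear]]])

theorem theorem1:
  fixes P :: "'w measure"
    and A :: "'k::hscalar ^'N ^'M"
    and x :: "'w \<Rightarrow> 'k ^'N"
    and ez :: "'w \<Rightarrow> 'k ^'M"
    and ey :: "'w \<Rightarrow> real ^'M"
    and f :: "'k \<Rightarrow> real"
    and Tf :: "real \<Rightarrow> real"
    and y :: "'w \<Rightarrow> real ^'M"
    and Tbar :: "real ^'M"
    and Kx :: "'k ^'N ^'N"
    and T :: "real ^'M ^'M"
    and t :: "'w \<Rightarrow> real ^'M"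
    and V :: "'M \<Rightarrow> 'k ^'N ^'N"
    and J :: "'k ^'N ^'N \<Rightarrow> ('M \<Rightarrow> 'k ^'N ^'N) \<Rightarrow> real"
    and W0 :: "'k ^'N ^'N"
    and W :: "'M \<Rightarrow> 'k ^'N ^'N"
  assumes P: "prob_space P"
    and x_rv: "x \<in> borel_measurable P"
    and ez_rv: "ez \<in> borel_measurable P"
    and ey_rv: "ey \<in> borel_measurable P"
    and f_meas: "f \<in> borel_measurable borel"
    and y_def: "\<And>\<omega>. y \<omega> = (\<chi> m. f ((A *v x \<omega>) $ m + ez \<omega> $ m) + ey \<omega> $ m)"
    and Tf_meas: "Tf \<in> borel_measurable borel"
    and Ty_sq: "\<And>m. integrable P (\<lambda>\<omega>. (Tf (y \<omega> $ m))\<^sup>2)"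
    and x_4: "integrable P (\<lambda>\<omega>. (norm (x \<omega>)) ^ 4)"
    and Tbar_def: "Tbar = (\<chi> m. integral\<^sup>L P (\<lambda>\<omega>. Tf (y \<omega> $ m)))"
    and Kx_def: "Kx = integral\<^sup>L P (\<lambda>\<omega>. outer_H (x \<omega>))"
    and T_def: "T = integral\<^sup>L P (\<lambda>\<omega>. (\<chi> i j. (Tf (y \<omega> $ i) - Tbar $ i) * (Tf (y \<omega> $ j) - Tbar $ j)))"
    and T_full_rank: "rank T = CARD('M)"
    and t_def: "\<And>\<omega>. T *v t \<omega> = (\<chi> m. Tf (y \<omega> $ m)) - Tbar"
    and V_def: "\<And>m. V m = integral\<^sup>L P (\<lambda>\<omega>. (Tf (y \<omega> $ m) - Tbar $ m) *\<^sub>R (outer_H (x \<omega>) - Kx))"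
    and J_def: "\<And>U0 U. J U0 U = integral\<^sup>L P (\<lambda>\<omega>.
                 (frob_norm (U0 + (\<Sum>m\<in>UNIV. Tf (y \<omega> $ m) *\<^sub>R U m) - outer_H (x \<omega>)))\<^sup>2)"
    and W_min: "\<And>U0 U. J W0 W \<le> J U0 U"
  shows "\<forall>\<omega>\<in>space P. W0 + (\<Sum>m\<in>UNIV. Tf (y \<omega> $ m) *\<^sub>R W m) = Kx + (\<Sum>m\<in>UNIV. t \<omega> $ m *\<^sub>R V m)"
proof -
  interpret prob_space P by (rule P)
  have P1[simp]: "prob (space P) = 1" by (rule P[THEN prob_space.prob_space])
  define s where "s m w = Tf (y w $ m)" for m w
  define X where "X w = outer_H (x w)" for w
  define b where "b m = Tbar $ m" for m
  define G where "G w = W0 + (\<Sum>m\<in>UNIV. s m w *\<^sub>R W m) - X w" for w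
  have s_meas: "s m \<in> borel_measurable P" for m
  proof -
    have "(\<lambda>w. f ((A *v x w) $ m + ez w $ m) + ey w $ m) \<in> borel_measurable P"
      using meas_nth[OF meas_mv[OF x_rv]] meas_nth[OF ez_rv] meas_nth[OF ey_rv] f_meas
      by measurable
    then have "(\<lambda>w. Tf (f ((A *v x w) $ m + ez w $ m) + ey w $ m)) \<in> borel_measurable P"
      using Tf_meas by measurable
    then show ?thesis unfolding s_def y_def by simp
  qed
  have s_sqi: "sqi P (s m)" for m
    using s_meas Ty_sq unfolding sqi_real s_def by auto
  have s_int: "integrable P (s m)" for m by (rule sqi_integrable[OF s_sqi])
  have b_int: "b m = (\<integral>w. s m w \<partial>P)" for m unfolding b_def Tbar_def s_def by simp
  have X_meas: "X \<in> borel_measurable P"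
    unfolding X_def by (rule measurable_compose[OF x_rv borel_measurable_continuous_onI[OF outer_H_cont]])
  have X_sqi: "sqi P X"
    unfolding sqi_def using X_meas x_4 by (simp add: X_def norm_outer_H power_mult[symmetric])
  have X_int: "integrable P X" by (rule sqi_integrable[OF X_sqi])
  have KX: "(\<integral>w. X w \<partial>P) = Kx" unfolding Kx_def X_def by simp
  have SW_sqi: "sqi P (\<lambda>w. \<Sum>m\<in>UNIV. s m w *\<^sub>R W m)"
    using s_meas Ty_sq[folded s_def] by (intro sqi_sum finite_UNIV sqi_scaleR) auto
  have G_sqi: "sqi P G"
    unfolding G_def by (intro sqi_diff sqi_add sqi_const SW_sqi X_sqi)
  have G_int: "integrable P G" by (rule sqi_integrable[OF G_sqi])
  have J_eq: "J U0 U = (\<integral>w. (norm (U0 + (\<Sum>m\<in>UNIV. s m w *\<^sub>R U m) - X w))\<^sup>2 \<partial>P)" for U0 U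
    unfolding J_def frob_norm_eq s_def X_def by simp
  have J0: "J W0 W = (\<integral>w. (norm (G w))\<^sup>2 \<partial>P)" unfolding J_eq G_def by simp

  (* first order condition, constant direction *)
  have EG: "(\<integral>w. G w \<partial>P) = 0"
  proof -
    have "(\<integral>w. G w \<bullet> B0 \<partial>P) = 0" for B0
    proof (rule quad_zero)
      fix e :: real
      have "J (W0 + e *\<^sub>R B0) W = (\<integral>w. (norm (G w + e *\<^sub>R B0))\<^sup>2 \<partial>P)"
        unfolding J_eq G_def by (simp add: algebra_simps)
      also have "\<dots> = J W0 W + 2 * e * (\<integral>w. G w \<bullet> B0 \<partial>P) + e\<^sup>2 * (\<integral>w. (norm B0)\<^sup>2 \<partial>P)"
        using sqi_expand[OF G_sqi sqi_const[of B0], of e] J0 by simp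
      finally show "J W0 W \<le> J W0 W + 2 * e * (\<integral>w. G w \<bullet> B0 \<partial>P) + e\<^sup>2 * (\<integral>w. (norm B0)\<^sup>2 \<partial>P)"
        using W_min[of "W0 + e *\<^sub>R B0" W] by simp
    qed simp
    then have "(\<integral>w. G w \<partial>P) \<bullet> B0 = 0" for B0 using G_int by simp
    from this[of "\<integral>w. G w \<partial>P"] show ?thesis by simp
  qed

  (* first order condition, direction k *)
  have EsG: "(\<integral>w. s k w *\<^sub>R G w \<partial>P) = 0" for k
  proof -
    have sB: "sqi P (\<lambda>w. s k w *\<^sub>R B)" for B
      using s_meas Ty_sq[folded s_def] by (intro sqi_scaleR) auto
    have sG_int: "integrable P (\<lambda>w. s k w *\<^sub>R G w)" by (rule sqi_scaleR_int[OF s_sqi G_sqi])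
    have "(\<integral>w. G w \<bullet> (s k w *\<^sub>R B) \<partial>P) = 0" for B
    proof (rule quad_zero)
      fix e :: real
      define U where "U m = W m + (if m = k then e *\<^sub>R B else 0)" for m
      have sum_U: "(\<Sum>m\<in>UNIV. s m w *\<^sub>R U m) = (\<Sum>m\<in>UNIV. s m w *\<^sub>R W m) + e *\<^sub>R (s k w *\<^sub>R B)" for w
      proof -
        have "(\<Sum>m\<in>UNIV. s m w *\<^sub>R U m) = (\<Sum>m\<in>UNIV. s m w *\<^sub>R W m + (if m = k then s k w *\<^sub>R (e *\<^sub>R B) else 0))"
          by (rule sum.cong) (auto simp: U_def scaleR_right_distrib)
        also have "\<dots> = (\<Sum>m\<in>UNIV. s m w *\<^sub>R W m) + s k w *\<^sub>R (e *\<^sub>R B)"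
          by (simp add: sum.distrib)
        finally show ?thesis by (simp add: ac_simps)
      qed
      have "J W0 U = (\<integral>w. (norm (G w + e *\<^sub>R (s k w *\<^sub>R B)))\<^sup>2 \<partial>P)"
        unfolding J_eq G_def sum_U by (simp add: algebra_simps)
      also have "\<dots> = J W0 W + 2 * e * (\<integral>w. G w \<bullet> (s k w *\<^sub>R B) \<partial>P) + e\<^sup>2 * (\<integral>w. (norm (s k w *\<^sub>R B))\<^sup>2 \<partial>P)"
        using sqi_expand[OF G_sqi sB, of e] J0 by simp
      finally show "J W0 W \<le> J W0 W + 2 * e * (\<integral>w. G w \<bullet> (s k w *\<^sub>R B) \<partial>P) + e\<^sup>2 * (\<integral>w. (norm (s k w *\<^sub>R B))\<^sup>2 \<partial>P)"
        using W_min[of W0 U] by simp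
    qed simp
    note z = this
    have "(\<integral>w. s k w *\<^sub>R G w \<partial>P) \<bullet> B = 0" for B
    proof -
      have "(\<integral>w. s k w *\<^sub>R G w \<partial>P) \<bullet> B = (\<integral>w. (s k w *\<^sub>R G w) \<bullet> B \<partial>P)"
        by (rule integral_inner_left[symmetric]) (use sG_int in auto)
      also have "\<dots> = (\<integral>w. G w \<bullet> (s k w *\<^sub>R B) \<partial>P)"
        by (rule Bochner_Integration.integral_cong) auto
      finally show ?thesis using z[of B] by simp
    qed
    from this[of "\<integral>w. s k w *\<^sub>R G w \<partial>P"] show ?thesis by simp
  qed

  define E where "E k m = (\<integral>w. s k w * s m w \<partial>P)" for k m
  define Q where "Q k = (\<integral>w. s k w *\<^sub>R X w \<partial>P)" for k
  have ss_int: "integrable P (\<lambda>w. s k w * s m w)" for k m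
    using sqi_inner[OF s_sqi s_sqi, of k m] by simp
  have sX_int: "integrable P (\<lambda>w. s k w *\<^sub>R X w)" for k by (rule sqi_scaleR_int[OF s_sqi X_sqi])
  have S_int: "integrable P (\<lambda>w. \<Sum>m\<in>UNIV. s m w *\<^sub>R W m)" by (rule sqi_integrable[OF SW_sqi])
  have ES: "(\<integral>w. (\<Sum>m\<in>UNIV. s m w *\<^sub>R W m) \<partial>P) = (\<Sum>m\<in>UNIV. b m *\<^sub>R W m)"
    by (subst Bochner_Integration.integral_sum) (auto simp: s_int b_int)
  have "(\<integral>w. G w \<partial>P) = (\<integral>w. W0 + (\<Sum>m\<in>UNIV. s m w *\<^sub>R W m) \<partial>P) - (\<integral>w. X w \<partial>P)"
    unfolding G_def by (rule Bochner_Integration.integral_diff) (use S_int X_int in auto)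
  also have "(\<integral>w. W0 + (\<Sum>m\<in>UNIV. s m w *\<^sub>R W m) \<partial>P) = (\<integral>w. W0 \<partial>P) + (\<integral>w. (\<Sum>m\<in>UNIV. s m w *\<^sub>R W m) \<partial>P)"
    by (rule Bochner_Integration.integral_add) (use S_int in auto)
  finally have F1: "W0 + (\<Sum>m\<in>UNIV. b m *\<^sub>R W m) = Kx"
    using EG by (simp add: ES KX)

  have F2: "b k *\<^sub>R W0 + (\<Sum>m\<in>UNIV. E k m *\<^sub>R W m) = Q k" for k
  proof -
    have pw: "s k w *\<^sub>R G w = (s k w *\<^sub>R W0 + (\<Sum>m\<in>UNIV. (s k w * s m w) *\<^sub>R W m)) - s k w *\<^sub>R X w" for w
      unfolding G_def by (simp add: scaleR_right_diff_distrib scaleR_right_distrib scaleR_sum_right)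
    have i1: "integrable P (\<lambda>w. s k w *\<^sub>R W0 + (\<Sum>m\<in>UNIV. (s k w * s m w) *\<^sub>R W m))"
      using s_int ss_int by auto
    have "0 = (\<integral>w. s k w *\<^sub>R G w \<partial>P)" using EsG by simp
    also have "\<dots> = (\<integral>w. s k w *\<^sub>R W0 + (\<Sum>m\<in>UNIV. (s k w * s m w) *\<^sub>R W m) \<partial>P) - Q k"
      unfolding pw Q_def by (rule Bochner_Integration.integral_diff) (use i1 sX_int in auto)
    also have "(\<integral>w. s k w *\<^sub>R W0 + (\<Sum>m\<in>UNIV. (s k w * s m w) *\<^sub>R W m) \<partial>P)
        = (\<integral>w. s k w *\<^sub>R W0 \<partial>P) + (\<integral>w. (\<Sum>m\<in>UNIV. (s k w * s m w) *\<^sub>R W m) \<partial>P)"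
      by (rule Bochner_Integration.integral_add) (use s_int ss_int in auto)
    also have "(\<integral>w. (\<Sum>m\<in>UNIV. (s k w * s m w) *\<^sub>R W m) \<partial>P) = (\<Sum>m\<in>UNIV. E k m *\<^sub>R W m)"
      by (subst Bochner_Integration.integral_sum) (auto simp: ss_int E_def)
    also have "(\<integral>w. s k w *\<^sub>R W0 \<partial>P) = b k *\<^sub>R W0" by (simp add: b_int s_int)
    finally show ?thesis by (simp add: algebra_simps)
  qed

  have c_sqi: "sqi P (\<lambda>w. s k w - b k)" for k by (intro sqi_diff s_sqi sqi_const)
  have cc_int: "integrable P (\<lambda>w. (s i w - b i) * (s j w - b j))" for i j
    using sqi_inner[OF c_sqi c_sqi, of i j] by simp
  have T_eq: "T = (\<chi> i j. \<integral>w. (s i w - b i) * (s j w - b j) \<partial>P)"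
  proof -
    have "T = (\<integral>w. (\<Sum>i\<in>UNIV. \<Sum>j\<in>UNIV. ((s i w - b i) * (s j w - b j)) *\<^sub>R axis i (axis j (1::real))) \<partial>P)"
      unfolding T_def s_def b_def by (subst mat_as_sum) simp
    also have "\<dots> = (\<Sum>i\<in>UNIV. \<Sum>j\<in>UNIV. (\<integral>w. (s i w - b i) * (s j w - b j) \<partial>P) *\<^sub>R axis i (axis j (1::real)))"
      by (simp add: Bochner_Integration.integral_sum cc_int)
    also have "\<dots> = (\<chi> i j. \<integral>w. (s i w - b i) * (s j w - b j) \<partial>P)"
      by (rule mat_as_sum[symmetric])
    finally show ?thesis .
  qed
  have F3: "T $ k $ m = E k m - b k * b m" for k m
  proof -
    have "T $ k $ m = (\<integral>w. (s k w - b k) * (s m w - b m) \<partial>P)" by (simp add: T_eq)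
    also have "\<dots> = (\<integral>w. (s k w * s m w - (b m * s k w + b k * s m w)) + b k * b m \<partial>P)"
      by (rule Bochner_Integration.integral_cong) (auto simp: algebra_simps)
    also have "\<dots> = (\<integral>w. s k w * s m w - (b m * s k w + b k * s m w) \<partial>P) + b k * b m"
      by (subst Bochner_Integration.integral_add) (use ss_int s_int in auto)
    also have "(\<integral>w. s k w * s m w - (b m * s k w + b k * s m w) \<partial>P) = E k m - (\<integral>w. b m * s k w + b k * s m w \<partial>P)"
      unfolding E_def by (rule Bochner_Integration.integral_diff) (use ss_int s_int in auto)
    also have "(\<integral>w. b m * s k w + b k * s m w \<partial>P) = b m * b k + b k * b m"
      by (subst Bochner_Integration.integral_add) (use s_int in \<open>auto simp: b_int\<close>)
    finally show ?thesis by simp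
  qed

  have F4: "V k = Q k - b k *\<^sub>R Kx" for k
  proof -
    have "V k = (\<integral>w. (s k w - b k) *\<^sub>R (X w - Kx) \<partial>P)"
      unfolding V_def s_def b_def X_def by simp
    also have "\<dots> = (\<integral>w. (s k w *\<^sub>R X w - b k *\<^sub>R X w) - (s k w - b k) *\<^sub>R Kx \<partial>P)"
      by (rule Bochner_Integration.integral_cong) (auto simp: algebra_simps)
    also have "\<dots> = (\<integral>w. s k w *\<^sub>R X w - b k *\<^sub>R X w \<partial>P) - (\<integral>w. (s k w - b k) *\<^sub>R Kx \<partial>P)"
      by (rule Bochner_Integration.integral_diff) (use sX_int X_int s_int in auto)
    also have "(\<integral>w. s k w *\<^sub>R X w - b k *\<^sub>R X w \<partial>P) = Q k - b k *\<^sub>R Kx"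
      unfolding Q_def by (subst Bochner_Integration.integral_diff) (use sX_int X_int in \<open>auto simp: KX\<close>)
    also have "(\<integral>w. (s k w - b k) *\<^sub>R Kx \<partial>P) = 0"
    proof -
      have "(\<integral>w. s k w - b k \<partial>P) = 0"
        by (subst Bochner_Integration.integral_diff) (use s_int in \<open>auto simp: b_int\<close>)
      then show ?thesis using s_int by simp
    qed
    finally show ?thesis by simp
  qed

  have VW: "V m = (\<Sum>k\<in>UNIV. T $ m $ k *\<^sub>R W k)" for m
  proof -
    have "(\<Sum>k\<in>UNIV. T $ m $ k *\<^sub>R W k) = (\<Sum>k\<in>UNIV. E m k *\<^sub>R W k) - b m *\<^sub>R (\<Sum>k\<in>UNIV. b k *\<^sub>R W k)"
      by (simp add: F3 scaleR_left_diff_distrib sum_subtractf scaleR_sum_right)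
    also have "\<dots> = (Q m - b m *\<^sub>R W0) - b m *\<^sub>R (Kx - W0)"
      unfolding F2[of m, symmetric] F1[symmetric] by (simp add: algebra_simps)
    also have "\<dots> = V m" by (simp add: F4 algebra_simps)
    finally show ?thesis by simp
  qed
  have Tsym: "T $ m $ k = T $ k $ m" for m k
    by (simp add: F3 E_def mult.commute)

  show ?thesis
  proof
    fix w assume "w \<in> space P"
    have tt: "(\<Sum>m\<in>UNIV. T $ k $ m * t w $ m) = s k w - b k" for k
    proof -
      have "(T *v t w) $ k = (\<Sum>m\<in>UNIV. T $ k $ m * t w $ m)" by (simp add: matrix_vector_mult_def)
      then show ?thesis using t_def[of w] by (simp add: s_def b_def)
    qed
    have "(\<Sum>m\<in>UNIV. t w $ m *\<^sub>R V m) = (\<Sum>m\<in>UNIV. \<Sum>k\<in>UNIV. (t w $ m * T $ m $ k) *\<^sub>R W k)"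
      by (simp add: VW scaleR_sum_right)
    also have "\<dots> = (\<Sum>k\<in>UNIV. \<Sum>m\<in>UNIV. (T $ k $ m * t w $ m) *\<^sub>R W k)"
      by (subst sum.swap) (simp add: Tsym mult.commute)
    also have "\<dots> = (\<Sum>k\<in>UNIV. (s k w - b k) *\<^sub>R W k)"
      by (simp add: scaleR_sum_left[symmetric] tt)
    finally have "Kx + (\<Sum>m\<in>UNIV. t w $ m *\<^sub>R V m) = W0 + (\<Sum>m\<in>UNIV. b m *\<^sub>R W m) + (\<Sum>k\<in>UNIV. (s k w - b k) *\<^sub>R W k)"
      using F1 by simp
    also have "\<dots> = W0 + (\<Sum>m\<in>UNIV. s m w *\<^sub>R W m)"
      by (simp add: scaleR_left_diff_distrib sum_subtractf)
    finally show "W0 + (\<Sum>m\<in>UNIV. Tf (y w $ m) *\<^sub>R W m) = Kx + (\<Sum>m\<in>UNIV. t w $ m *\<^sub>R V m)"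
      by (simp add: s_def)
  qed
qed

end
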